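(* For a monoid $H$, the following are equivalent: (a) $H$ is aperiodic; (b) $\mathcal{P}_{\mathrm{fin},1}(H)$ is BF-atomic; (c) $\mathcal{P}_{\mathrm{fin},1}(H)$ is BF; (d) $\mathcal{P}_{\mathrm{fin},1}(H)$ is FF; (e) $\mathcal{P}_{\mathrm{fin},1}(H)$ is FF-atomic.
   Context: A monoid $H$ is aperiodic if every element $x\neq 1_H$ generates an infinite submonoid. $\mathcal{P}_{\mathrm{fin},1}(H)$ denotes the set of all non-empty finite subsets of $H$ containing $1_H$, a monoid under $XY=\{xy:x\in X,y\in Y\}$. In a monoid $M$: $x\mid_M y$ iff $y\in MxM$; $x,y$ are associated if each divides the other; $x$ properly divides $y$ if $x\mid_M y$ and $y\nmid_M x$. A unit-divisor is an element dividing $1_M$; other elements are non-unit-divisors. An irreducible is a non-unit-divisor $a$ with $a\neq xy$ for all non-unit-divisors $x,y$ properly dividing $a$; an atom is a non-unit-divisor that is not a product of two non-unit-divisors. A factorization (resp. atomic factorization) of $x$ is a finite word over the irreducibles (resp. atoms) whose product is $x$; its length is the number of letters. Two words are equivalent if each is, up to associatedness of letters, a subword of a permutation of the other. $M$ is BF if every non-unit-divisor has a factorization into irreducibles and, for each element, the set of lengths of its factorizations is bounded; FF if every non-unit-divisor has a factorization and each element has only finitely many pairwise inequivalent factorizations. BF-atomic and FF-atomic are defined identically with atoms and atomic factorizations in place of irreducibles and factorizations. *)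

theory Defs
  imports "HOL-Algebra.Coset" "HOL-Library.Sublist" "HOL-Library.Multiset"
begin

definition aperiodic :: "('a, 'b) monoid_scheme \<Rightarrow> bool" where
  "aperiodic H \<longleftrightarrow>
     (\<forall>x \<in> carrier H. x \<noteq> \<one>\<^bsub>H\<^esub> \<longrightarrow> infinite {x [^]\<^bsub>H\<^esub> (n::nat) | n. True})"

definition Pfin1 :: "('a, 'b) monoid_scheme \<Rightarrow> 'a set monoid" where
  "Pfin1 H = \<lparr> carrier = {X. X \<subseteq> carrier H \<and> finite X \<and> X \<noteq> {} \<and> \<one>\<^bsub>H\<^esub> \<in> X},
              monoid.mult = (\<lambda>X Y. X <#>\<^bsub>H\<^esub> Y),
              one = {\<one>\<^bsub>H\<^esub>} \<rparr>"

definition mdvd :: "('a, 'b) monoid_scheme \<Rightarrow> 'a \<Rightarrow> 'a \<Rightarrow> bool" where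
  "mdvd M x y \<longleftrightarrow> x \<in> carrier M \<and> y \<in> carrier M \<and>
     (\<exists>u \<in> carrier M. \<exists>v \<in> carrier M. y = u \<otimes>\<^bsub>M\<^esub> x \<otimes>\<^bsub>M\<^esub> v)"

definition massoc :: "('a, 'b) monoid_scheme \<Rightarrow> 'a \<Rightarrow> 'a \<Rightarrow> bool" where
  "massoc M x y \<longleftrightarrow> mdvd M x y \<and> mdvd M y x"

definition proper_dvd :: "('a, 'b) monoid_scheme \<Rightarrow> 'a \<Rightarrow> 'a \<Rightarrow> bool" where
  "proper_dvd M x y \<longleftrightarrow> mdvd M x y \<and> \<not> mdvd M y x"

definition unit_divisor :: "('a, 'b) monoid_scheme \<Rightarrow> 'a \<Rightarrow> bool" where
  "unit_divisor M x \<longleftrightarrow> mdvd M x \<one>\<^bsub>M\<^esub>"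

definition non_unit_divisor :: "('a, 'b) monoid_scheme \<Rightarrow> 'a \<Rightarrow> bool" where
  "non_unit_divisor M x \<longleftrightarrow> x \<in> carrier M \<and> \<not> unit_divisor M x"

definition irred :: "('a, 'b) monoid_scheme \<Rightarrow> 'a \<Rightarrow> bool" where
  "irred M a \<longleftrightarrow> non_unit_divisor M a \<and>
     (\<forall>x y. non_unit_divisor M x \<longrightarrow> non_unit_divisor M y \<longrightarrow>
        proper_dvd M x a \<longrightarrow> proper_dvd M y a \<longrightarrow> a \<noteq> x \<otimes>\<^bsub>M\<^esub> y)"

definition atom :: "('a, 'b) monoid_scheme \<Rightarrow> 'a \<Rightarrow> bool" where
  "atom M a \<longleftrightarrow> non_unit_divisor M a \<and>
     (\<forall>x y. non_unit_divisor M x \<longrightarrow> non_unit_divisor M y \<longrightarrow> a \<noteq> x \<otimes>\<^bsub>M\<^esub> y)"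

definition word_prod :: "('a, 'b) monoid_scheme \<Rightarrow> 'a list \<Rightarrow> 'a" where
  "word_prod M w = foldr (\<lambda>a b. a \<otimes>\<^bsub>M\<^esub> b) w \<one>\<^bsub>M\<^esub>"

definition facts_over :: "('a \<Rightarrow> bool) \<Rightarrow> ('a, 'b) monoid_scheme \<Rightarrow> 'a \<Rightarrow> 'a list set" where
  "facts_over P M x = {w. (\<forall>a \<in> set w. P a) \<and> word_prod M w = x}"

definition word_below :: "('a, 'b) monoid_scheme \<Rightarrow> 'a list \<Rightarrow> 'a list \<Rightarrow> bool" where
  "word_below M u v \<longleftrightarrow>
     (\<exists>v' u'. mset v' = mset v \<and> subseq u' v' \<and> list_all2 (massoc M) u u')"

definition word_equiv :: "('a, 'b) monoid_scheme \<Rightarrow> 'a list \<Rightarrow> 'a list \<Rightarrow> bool" where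
  "word_equiv M u v \<longleftrightarrow> word_below M u v \<and> word_below M v u"

definition BF_over :: "('a \<Rightarrow> bool) \<Rightarrow> ('a, 'b) monoid_scheme \<Rightarrow> bool" where
  "BF_over P M \<longleftrightarrow>
     (\<forall>x. non_unit_divisor M x \<longrightarrow> facts_over P M x \<noteq> {}) \<and>
     (\<forall>x \<in> carrier M. bdd_above (length ` facts_over P M x))"

definition FF_over :: "('a \<Rightarrow> bool) \<Rightarrow> ('a, 'b) monoid_scheme \<Rightarrow> bool" where
  "FF_over P M \<longleftrightarrow>
     (\<forall>x. non_unit_divisor M x \<longrightarrow> facts_over P M x \<noteq> {}) \<and>
     (\<forall>x \<in> carrier M. \<forall>A \<subseteq> facts_over P M x.
        (\<forall>u \<in> A. \<forall>v \<in> A. u \<noteq> v \<longrightarrow> \<not> word_equiv M u v) \<longrightarrow> finite A)"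

definition BF :: "('a, 'b) monoid_scheme \<Rightarrow> bool" where
  "BF M \<longleftrightarrow> BF_over (irred M) M"
definition BF_atomic :: "('a, 'b) monoid_scheme \<Rightarrow> bool" where
  "BF_atomic M \<longleftrightarrow> BF_over (atom M) M"
definition FF :: "('a, 'b) monoid_scheme \<Rightarrow> bool" where
  "FF M \<longleftrightarrow> FF_over (irred M) M"
definition FF_atomic :: "('a, 'b) monoid_scheme \<Rightarrow> bool" where
  "FF_atomic M \<longleftrightarrow> FF_over (atom M) M"

end

theory Submission
  imports Defs
begin

context monoid
begin

abbreviation "PP \<equiv> Pfin1 G"

lemma smem: "a \<in> X <#> Y \<longleftrightarrow> (\<exists>x\<in>X. \<exists>y\<in>Y. a = x \<otimes> y)"
  unfolding set_mult_def by blast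

lemma carrP: "X \<in> carrier PP \<longleftrightarrow> X \<subseteq> carrier G \<and> finite X \<and> X \<noteq> {} \<and> \<one> \<in> X"
  by (simp add: Pfin1_def)

lemma multP: "X \<otimes>\<^bsub>PP\<^esub> Y = X <#> Y"
  by (simp add: Pfin1_def)

lemma oneP: "\<one>\<^bsub>PP\<^esub> = {\<one>}"
  by (simp add: Pfin1_def)

lemma sm_fin: "finite X \<Longrightarrow> finite Y \<Longrightarrow> finite (X <#> Y)"
proof -
  assume "finite X" "finite Y"
  have "X <#> Y = (\<lambda>(x,y). x \<otimes> y) ` (X \<times> Y)" unfolding set_mult_def by auto
  thus ?thesis using \<open>finite X\<close> \<open>finite Y\<close> by simp
qed

lemma sm_carr: "X \<subseteq> carrier G \<Longrightarrow> Y \<subseteq> carrier G \<Longrightarrow> X <#> Y \<subseteq> carrier G"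
  unfolding set_mult_def by blast

lemma one_in_sm: "\<one> \<in> X \<Longrightarrow> \<one> \<in> Y \<Longrightarrow> \<one> \<in> X <#> Y"
  unfolding smem by (metis l_one one_closed)

lemma closedP: "X \<in> carrier PP \<Longrightarrow> Y \<in> carrier PP \<Longrightarrow> X <#> Y \<in> carrier PP"
proof -
  assume a: "X \<in> carrier PP" "Y \<in> carrier PP"
  then have "X \<subseteq> carrier G" "finite X" "\<one> \<in> X" "Y \<subseteq> carrier G" "finite Y" "\<one> \<in> Y"
    unfolding carrP by auto
  then have "X <#> Y \<subseteq> carrier G" "finite (X <#> Y)" "\<one> \<in> X <#> Y"
    using sm_fin sm_carr one_in_sm by auto
  then show ?thesis unfolding carrP by auto
qed

lemma subL: "X \<subseteq> carrier G \<Longrightarrow> \<one> \<in> Y \<Longrightarrow> X \<subseteq> X <#> Y"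
proof
  fix x assume "X \<subseteq> carrier G" "\<one> \<in> Y" "x \<in> X"
  then have "x = x \<otimes> \<one>" by auto
  then show "x \<in> X <#> Y" unfolding smem using \<open>\<one> \<in> Y\<close> \<open>x \<in> X\<close> by blast
qed

lemma subR: "Y \<subseteq> carrier G \<Longrightarrow> \<one> \<in> X \<Longrightarrow> Y \<subseteq> X <#> Y"
proof
  fix x assume "Y \<subseteq> carrier G" "\<one> \<in> X" "x \<in> Y"
  then have "x = \<one> \<otimes> x" by auto
  then show "x \<in> X <#> Y" unfolding smem using \<open>\<one> \<in> X\<close> \<open>x \<in> Y\<close> by blast
qed

lemma one_sm: assumes "Y \<subseteq> carrier G" shows "{\<one>} <#> Y = Y"
proof -
  have "\<And>k. k \<in> Y \<Longrightarrow> \<one> \<otimes> k = k" using assms by auto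
  then show ?thesis unfolding set_mult_def by simp
qed

lemma sm_one: assumes "Y \<subseteq> carrier G" shows "Y <#> {\<one>} = Y"
proof -
  have "\<And>k. k \<in> Y \<Longrightarrow> k \<otimes> \<one> = k" using assms by auto
  then show ?thesis unfolding set_mult_def by simp
qed

lemma sm_assoc:
  assumes "X \<subseteq> carrier G" "Y \<subseteq> carrier G" "Z \<subseteq> carrier G"
  shows "(X <#> Y) <#> Z = X <#> (Y <#> Z)"
proof
  show "(X <#> Y) <#> Z \<subseteq> X <#> (Y <#> Z)"
  proof
    fix a assume "a \<in> (X <#> Y) <#> Z"
    then obtain x y z where xyz: "x \<in> X" "y \<in> Y" "z \<in> Z" "a = (x \<otimes> y) \<otimes> z"
      by (auto simp: smem)
    then have "a = x \<otimes> (y \<otimes> z)" using assms xyz by (meson m_assoc subsetD)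
    moreover have "y \<otimes> z \<in> Y <#> Z" unfolding smem using xyz by blast
    ultimately show "a \<in> X <#> (Y <#> Z)" using xyz smem[of a X "Y <#> Z"] by blast
  qed
  show "X <#> (Y <#> Z) \<subseteq> (X <#> Y) <#> Z"
  proof
    fix a assume "a \<in> X <#> (Y <#> Z)"
    then obtain x y z where xyz: "x \<in> X" "y \<in> Y" "z \<in> Z" "a = x \<otimes> (y \<otimes> z)"
      by (auto simp: smem)
    then have "a = (x \<otimes> y) \<otimes> z" using assms xyz by (metis m_assoc subsetD)
    moreover have "x \<otimes> y \<in> X <#> Y" unfolding smem using xyz by blast
    ultimately show "a \<in> (X <#> Y) <#> Z" using xyz smem[of a "X <#> Y" Z] by blast
  qed
qed

lemma wp_Nil[simp]: "word_prod PP [] = {\<one>}"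
  by (simp add: word_prod_def Pfin1_def)

lemma wp_Cons[simp]: "word_prod PP (a # w) = a <#> word_prod PP w"
  by (simp add: word_prod_def Pfin1_def)

lemma wp_carr: "set w \<subseteq> carrier PP \<Longrightarrow> word_prod PP w \<in> carrier PP"
proof (induction w)
  case Nil
  have "{\<one>} \<in> carrier PP" unfolding carrP by simp
  then show ?case by simp
next
  case (Cons a w)
  then show ?case using closedP[of a "word_prod PP w"] by simp
qed

lemma wp_append: "set u \<subseteq> carrier PP \<Longrightarrow> set v \<subseteq> carrier PP \<Longrightarrow>
   word_prod PP (u @ v) = word_prod PP u <#> word_prod PP v"
proof (induction u)
  case Nil
  then show ?case using wp_carr[of v] by (simp add: one_sm carrP)
next
  case (Cons a u)
  then show ?case using wp_carr[of u] wp_carr[of v] by (simp add: sm_assoc carrP)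
qed

lemma letter_sub: "set w \<subseteq> carrier PP \<Longrightarrow> W \<in> set w \<Longrightarrow> W \<subseteq> word_prod PP w"
proof (induction w)
  case Nil then show ?case by simp
next
  case (Cons a w)
  have c: "word_prod PP w \<in> carrier PP" using Cons.prems wp_carr by simp
  show ?case
  proof (cases "W = a")
    case True
    then show ?thesis using c Cons.prems by (simp add: subL carrP)
  next
    case False
    then have "W \<subseteq> word_prod PP w" using Cons by simp
    also have "\<dots> \<subseteq> a <#> word_prod PP w" using c Cons.prems by (intro subR) (auto simp: carrP)
    finally show ?thesis by simp
  qed
qed

lemma pow_in: "set w \<subseteq> carrier PP \<Longrightarrow> y \<in> carrier G \<Longrightarrow>
   j \<le> length (filter (\<lambda>W. y \<in> W) w) \<Longrightarrow> y [^] j \<in> word_prod PP w"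
proof (induction w arbitrary: j)
  case Nil then show ?case by simp
next
  case (Cons a w)
  have a: "a \<in> carrier PP" using Cons.prems by simp
  show ?case
  proof (cases "y \<in> a \<and> j > 0")
    case True
    then obtain k where j: "j = Suc k" by (cases j) auto
    have "y [^] k \<in> word_prod PP w" using Cons True j by auto
    moreover have "y [^] j = y \<otimes> y [^] k" using j Cons.prems(2) nat_pow_Suc2 by metis
    ultimately show ?thesis using True unfolding wp_Cons smem by blast
  next
    case False
    then have "j \<le> length (filter (\<lambda>W. y \<in> W) w)" using Cons.prems(3) by (cases "y \<in> a") auto
    then have "y [^] j \<in> word_prod PP w" using Cons by auto
    moreover have "\<one> \<in> a" using a by (simp add: carrP)
    ultimately show ?thesis using Cons.prems(2) by (auto simp: smem) (metis l_one nat_pow_closed)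
  qed
qed

lemma len_sum: "finite Y \<Longrightarrow> \<forall>W\<in>set w. W \<inter> Y \<noteq> {} \<Longrightarrow>
   length w \<le> (\<Sum>y\<in>Y. length (filter (\<lambda>W. y \<in> W) w))"
proof (induction w)
  case Nil then show ?case by simp
next
  case (Cons a w)
  have e: "(\<Sum>y\<in>Y. length (filter (\<lambda>W. y \<in> W) (a # w))) =
     (\<Sum>y\<in>Y. (if y \<in> a then 1 else 0)) + (\<Sum>y\<in>Y. length (filter (\<lambda>W. y \<in> W) w))"
    by (auto simp: sum.distrib[symmetric] intro!: sum.cong)
  have "(\<Sum>y\<in>Y. (if y \<in> a then 1 else 0::nat)) = card (Y \<inter> a)"
    using Cons.prems(1) by (simp add: sum.If_cases Int_commute)
  moreover have "card (Y \<inter> a) \<ge> 1" using Cons.prems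
    by (metis Int_commute One_nat_def Suc_leI card_gt_0_iff finite_Int list.set_intros(1))
  ultimately show ?case using e Cons by simp
qed

lemma pow_inj:
  assumes "y \<in> carrier G" "infinite {y [^] (n::nat) | n. True}"
  shows "inj (\<lambda>n::nat. y [^] n)"
proof (rule ccontr)
  assume "\<not> inj (\<lambda>n::nat. y [^] n)"
  then obtain a b :: nat where ab: "y [^] a = y [^] b" "a < b"
    unfolding inj_def by (metis linorder_neqE_nat)
  have "\<forall>n::nat. \<exists>m<b. y [^] n = y [^] m"
  proof
    fix n :: nat show "\<exists>m<b. y [^] n = y [^] m"
    proof (induction n rule: less_induct)
      case (less n)
      show ?case
      proof (cases "n < b")
        case True then show ?thesis by blast
      next
        case False
        have "y [^] n = y [^] (n - b) \<otimes> y [^] b" using False assms(1) by (simp add: nat_pow_mult)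
        also have "\<dots> = y [^] (n - b) \<otimes> y [^] a" using ab by simp
        also have "\<dots> = y [^] (n - b + a)" using assms(1) by (simp add: nat_pow_mult)
        finally show ?thesis using less[of "n - b + a"] ab False by auto
      qed
    qed
  qed
  then have "{y [^] (n::nat) | n. True} \<subseteq> (\<lambda>n. y [^] n) ` {..<b}" by blast
  then show False using assms(2) finite_subset by blast
qed


lemma nonunit_iff: "non_unit_divisor PP X \<longleftrightarrow> X \<in> carrier PP \<and> X \<noteq> {\<one>}"
proof
  assume a: "non_unit_divisor PP X"
  then have X: "X \<in> carrier PP" unfolding non_unit_divisor_def by simp
  have o: "{\<one>} \<in> carrier PP" unfolding carrP by simp
  have "X \<noteq> {\<one>}"
  proof
    assume "X = {\<one>}"
    then have "{\<one>} = {\<one>} \<otimes>\<^bsub>PP\<^esub> X \<otimes>\<^bsub>PP\<^esub> {\<one>}" by (simp add: multP one_sm)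
    then have "unit_divisor PP X" unfolding unit_divisor_def mdvd_def oneP using X o by blast
    then show False using a unfolding non_unit_divisor_def by simp
  qed
  then show "X \<in> carrier PP \<and> X \<noteq> {\<one>}" using X by simp
next
  assume a: "X \<in> carrier PP \<and> X \<noteq> {\<one>}"
  have "\<not> unit_divisor PP X"
  proof
    assume "unit_divisor PP X"
    then obtain U V where UV: "U \<in> carrier PP" "V \<in> carrier PP" "{\<one>} = U <#> X <#> V"
      unfolding unit_divisor_def mdvd_def oneP multP by blast
    have "X \<subseteq> U <#> X" using UV a by (intro subR) (auto simp: carrP)
    also have "\<dots> \<subseteq> U <#> X <#> V" using UV a closedP[of U X] by (intro subL) (auto simp: carrP)
    finally have "X \<subseteq> {\<one>}" using UV by simp
    then show False using a by (auto simp: carrP)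
  qed
  then show "non_unit_divisor PP X" using a unfolding non_unit_divisor_def by simp
qed

lemma atom_irred: "atom M a \<Longrightarrow> irred M a"
  unfolding atom_def irred_def by blast

lemma ap_right:
  assumes ap: "aperiodic G" and Y: "Y \<in> carrier PP" and Z: "Z \<in> carrier PP" "Z \<noteq> {\<one>}"
  shows "Y <#> Z \<noteq> Y"
proof
  assume e: "Y <#> Z = Y"
  obtain z where z: "z \<in> Z" "z \<noteq> \<one>" using Z unfolding carrP by blast
  have zc: "z \<in> carrier G" using z Z unfolding carrP by blast
  have "z [^] n \<in> Y" for n :: nat
  proof (induction n)
    case 0 then show ?case using Y unfolding carrP by simp
  next
    case (Suc n)
    then have "z [^] n \<otimes> z \<in> Y <#> Z" unfolding smem using z by blast
    then show ?case using e by simp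
  qed
  then have "{z [^] (n::nat) | n. True} \<subseteq> Y" by blast
  then have "finite {z [^] (n::nat) | n. True}" using Y unfolding carrP using finite_subset by blast
  then show False using ap zc z unfolding aperiodic_def by blast
qed

lemma ap_left:
  assumes ap: "aperiodic G" and Y: "Y \<in> carrier PP" "Y \<noteq> {\<one>}" and Z: "Z \<in> carrier PP"
  shows "Y <#> Z \<noteq> Z"
proof
  assume e: "Y <#> Z = Z"
  obtain z where z: "z \<in> Y" "z \<noteq> \<one>" using Y unfolding carrP by blast
  have zc: "z \<in> carrier G" using z Y unfolding carrP by blast
  have "z [^] n \<in> Z" for n :: nat
  proof (induction n)
    case 0 then show ?case using Z unfolding carrP by simp
  next
    case (Suc n)
    then have "z \<otimes> z [^] n \<in> Y <#> Z" unfolding smem using z by blast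
    then show ?case using e zc nat_pow_Suc2 by metis
  qed
  then have "{z [^] (n::nat) | n. True} \<subseteq> Z" by blast
  then have "finite {z [^] (n::nat) | n. True}" using Z unfolding carrP using finite_subset by blast
  then show False using ap zc z unfolding aperiodic_def by blast
qed

lemma atomic_exists:
  assumes ap: "aperiodic G"
  shows "X \<in> carrier PP \<Longrightarrow> X \<noteq> {\<one>} \<Longrightarrow> \<exists>w. (\<forall>a\<in>set w. atom PP a) \<and> word_prod PP w = X"
proof (induction "card X" arbitrary: X rule: less_induct)
  case less
  show ?case
  proof (cases "atom PP X")
    case True
    then show ?thesis using less.prems by (intro exI[of _ "[X]"]) (simp add: sm_one carrP)
  next
    case False
    have nu: "non_unit_divisor PP X" using less.prems nonunit_iff by simp
    then obtain Y Z where YZ: "non_unit_divisor PP Y" "non_unit_divisor PP Z" "X = Y <#> Z"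
      using False unfolding atom_def multP by blast
    have Y: "Y \<in> carrier PP" "Y \<noteq> {\<one>}" and Z: "Z \<in> carrier PP" "Z \<noteq> {\<one>}"
      using YZ nonunit_iff by auto
    have "Y \<subseteq> X" using YZ Y Z by (simp add: subL carrP)
    moreover have "Y \<noteq> X" using ap_right[OF ap Y(1) Z] YZ by simp
    ultimately have cY: "card Y < card X" using less.prems by (intro psubset_card_mono) (auto simp: carrP)
    have "Z \<subseteq> X" using YZ Y Z by (simp add: subR carrP)
    moreover have "Z \<noteq> X" using ap_left[OF ap Y Z(1)] YZ by simp
    ultimately have cZ: "card Z < card X" using less.prems by (intro psubset_card_mono) (auto simp: carrP)
    obtain u where u: "\<forall>a\<in>set u. atom PP a" "word_prod PP u = Y" using less.hyps[OF cY Y] by blast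
    obtain v where v: "\<forall>a\<in>set v. atom PP a" "word_prod PP v = Z" using less.hyps[OF cZ Z] by blast
    have su: "set u \<subseteq> carrier PP" "set v \<subseteq> carrier PP" using u v
      unfolding atom_def non_unit_divisor_def by auto
    show ?thesis using u v YZ wp_append[OF su] by (intro exI[of _ "u @ v"]) auto
  qed
qed

lemma len_bound:
  assumes ap: "aperiodic G" and X: "X \<in> carrier PP"
    and w: "\<forall>a\<in>set w. non_unit_divisor PP a" "word_prod PP w = X"
  shows "length w \<le> card X * card X"
proof -
  have sw: "set w \<subseteq> carrier PP" using w unfolding non_unit_divisor_def by auto
  have fX: "finite X" and cX: "X \<subseteq> carrier G" using X unfolding carrP by auto
  let ?Y = "X - {\<one>}"
  have "\<forall>W\<in>set w. W \<inter> ?Y \<noteq> {}"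
  proof
    fix W assume W: "W \<in> set w"
    then have "W \<subseteq> X" using letter_sub[OF sw W] w by simp
    moreover have "W \<in> carrier PP" "W \<noteq> {\<one>}" using W w nonunit_iff by auto
    ultimately show "W \<inter> ?Y \<noteq> {}" unfolding carrP by blast
  qed
  then have "length w \<le> (\<Sum>y\<in>?Y. length (filter (\<lambda>W. y \<in> W) w))" using fX by (intro len_sum) auto
  also have "\<dots> \<le> card ?Y * card X"
  proof -
   have "length (filter (\<lambda>W. y \<in> W) w) \<le> card X" if y: "y \<in> ?Y" for y
   proof -
    have yc: "y \<in> carrier G" using y cX by auto
    have inf: "infinite {y [^] (n::nat) | n. True}" using ap y yc unfolding aperiodic_def by blast
    let ?c = "length (filter (\<lambda>W. y \<in> W) w)"
    have "(\<lambda>j::nat. y [^] j) ` {..?c} \<subseteq> X" using pow_in[OF sw yc] w by auto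
    moreover have "inj_on (\<lambda>j::nat. y [^] j) {..?c}" using pow_inj[OF yc inf] by (simp add: inj_on_def inj_def)
    ultimately have "card {..?c} \<le> card X" using fX by (metis card_image card_mono)
    then show "?c \<le> card X" by simp
   qed
   then show ?thesis using sum_bounded_above[of ?Y "\<lambda>y. length (filter (\<lambda>W. y \<in> W) w)" "card X"] by simp
  qed
  also have "\<dots> \<le> card X * card X" using fX by (simp add: card_mono)
  finally show ?thesis .
qed

lemma ap_good:
  assumes ap: "aperiodic G" and P1: "\<forall>a. P a \<longrightarrow> non_unit_divisor PP a"
    and P2: "\<forall>a. atom PP a \<longrightarrow> P a"
  shows "BF_over P PP \<and> FF_over P PP"
proof -
  have ex: "\<forall>x. non_unit_divisor PP x \<longrightarrow> facts_over P PP x \<noteq> {}"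
  proof (intro allI impI)
    fix x assume "non_unit_divisor PP x"
    then have "x \<in> carrier PP" "x \<noteq> {\<one>}" using nonunit_iff by auto
    then obtain w where "\<forall>a\<in>set w. atom PP a" "word_prod PP w = x"
      using atomic_exists[OF ap, of x] by blast
    then have "w \<in> facts_over P PP x" using P2 unfolding facts_over_def by auto
    then show "facts_over P PP x \<noteq> {}" by blast
  qed
  have sub: "facts_over P PP x \<subseteq> {w. set w \<subseteq> Pow x \<and> length w \<le> card x * card x}"
    if x: "x \<in> carrier PP" for x
  proof
    fix w assume "w \<in> facts_over P PP x"
    then have w: "\<forall>a\<in>set w. non_unit_divisor PP a" "word_prod PP w = x"
      using P1 unfolding facts_over_def by auto
    have sw: "set w \<subseteq> carrier PP" using w unfolding non_unit_divisor_def by auto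
    have "set w \<subseteq> Pow x" using letter_sub[OF sw] w by auto
    then show "w \<in> {w. set w \<subseteq> Pow x \<and> length w \<le> card x * card x}"
      using len_bound[OF ap x w] by simp
  qed
  have fin: "finite (facts_over P PP x)" if x: "x \<in> carrier PP" for x
  proof -
    have "finite (Pow x)" using x unfolding carrP by simp
    then have "finite {w. set w \<subseteq> Pow x \<and> length w \<le> card x * card x}"
      by (rule finite_lists_length_le)
    then show ?thesis using sub[OF x] by (rule finite_subset[rotated])
  qed
  have "bdd_above (length ` facts_over P PP x)" if x: "x \<in> carrier PP" for x
    using fin[OF x] by simp
  then have "BF_over P PP" using ex unfolding BF_over_def by (intro conjI ballI) auto
  moreover have "FF_over P PP" unfolding FF_over_def
  proof (intro conjI ballI allI impI)
    fix x A assume "x \<in> carrier PP" "A \<subseteq> facts_over P PP x"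
    then show "finite A" using fin by (meson finite_subset)
  qed (use ex in blast)
  ultimately show ?thesis by blast
qed

lemma below_len: "word_below M u v \<Longrightarrow> length u \<le> length v"
  unfolding word_below_def
  by (metis list_all2_lengthD list_emb_length size_mset)

lemma equiv_len: "word_equiv M u v \<Longrightarrow> length u = length v"
  unfolding word_equiv_def using below_len le_antisym by blast

lemma nonap_bad:
  assumes nap: "\<not> aperiodic G" and P1: "\<forall>a. P a \<longrightarrow> non_unit_divisor PP a"
  shows "\<not> BF_over P PP \<and> \<not> FF_over P PP"
proof -
  obtain x where x: "x \<in> carrier G" "x \<noteq> \<one>" "finite {x [^] (n::nat) | n. True}"
    using nap unfolding aperiodic_def by blast
  define C where "C = {x [^] (n::nat) | n. True}"
  have C: "C \<in> carrier PP" unfolding carrP C_def using x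
    by (auto intro!: exI[of _ "0::nat"])
  have xC: "x \<in> C" unfolding C_def using x by (auto intro!: exI[of _ "1::nat"])
  have C1: "C \<noteq> {\<one>}" using xC x by auto
  have CC: "C <#> C = C"
  proof
    show "C <#> C \<subseteq> C"
    proof
      fix c assume "c \<in> C <#> C"
      then obtain a b where "c = x [^] (a::nat) \<otimes> x [^] (b::nat)" unfolding smem C_def by blast
      then have "c = x [^] (a + b)" using x by (simp add: nat_pow_mult)
      then show "c \<in> C" unfolding C_def by blast
    qed
    show "C \<subseteq> C <#> C" using C by (intro subL) (auto simp: carrP)
  qed
  have nu: "non_unit_divisor PP C" using C C1 nonunit_iff by simp
  show ?thesis
  proof (cases "facts_over P PP C = {}")
    case True
    then show ?thesis using nu unfolding BF_over_def FF_over_def by blast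
  next
    case False
    then obtain w where w: "\<forall>a\<in>set w. P a" "word_prod PP w = C" unfolding facts_over_def by blast
    have wne: "w \<noteq> []" using w C1 by auto
    define f where "f k = concat (replicate (Suc k) w)" for k
    have sw: "set w \<subseteq> carrier PP" using w P1 unfolding non_unit_divisor_def by auto
    have fC: "word_prod PP (f k) = C" for k
    proof (induction k)
      case 0 then show ?case using w by (simp add: f_def)
    next
      case (Suc k)
      have "f (Suc k) = w @ f k" by (simp add: f_def)
      moreover have "set (f k) \<subseteq> carrier PP" using sw by (auto simp: f_def)
      ultimately show ?case using wp_append[OF sw] Suc CC w by simp
    qed
    have ff: "f k \<in> facts_over P PP C" for k
      using fC w unfolding facts_over_def f_def by auto
    have fl: "length (f k) = Suc k * length w" for k
      by (simp add: f_def length_concat sum_list_replicate)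
    have lw: "length w > 0" using wne by simp
    have linj: "inj (\<lambda>k. length (f k))" unfolding inj_def fl using lw by simp
    have "\<not> bdd_above (length ` facts_over P PP C)"
    proof
      assume "bdd_above (length ` facts_over P PP C)"
      then obtain B where B: "\<forall>u\<in>facts_over P PP C. length u \<le> B" unfolding bdd_above_def by auto
      then have "length (f B) \<le> B" using ff by blast
      then show False using fl[of B] lw
        by (metis Suc_le_lessD leD le_add1 mult_Suc mult_le_mono2 nat_mult_1_right One_nat_def Suc_leI)
    qed
    then have "\<not> BF_over P PP" unfolding BF_over_def using C by auto
    moreover have "\<not> FF_over P PP"
    proof
      assume FF: "FF_over P PP"
      have "range f \<subseteq> facts_over P PP C" using ff by auto
      moreover have "\<forall>u\<in>range f. \<forall>v\<in>range f. u \<noteq> v \<longrightarrow> \<not> word_equiv PP u v"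
        using equiv_len linj unfolding inj_def by fastforce
      ultimately have "finite (range f)" using FF C unfolding FF_over_def by blast
      moreover have "inj f" using linj unfolding inj_def by metis
      ultimately show False using finite_imageD[of f UNIV] by simp
    qed
    ultimately show ?thesis by blast
  qed
qed

end

theorem proposition2p7:
  fixes H :: "('a, 'b) monoid_scheme"
  assumes "monoid H"
  shows "(aperiodic H \<longleftrightarrow> BF_atomic (Pfin1 H)) \<and>
         (aperiodic H \<longleftrightarrow> BF (Pfin1 H)) \<and>
         (aperiodic H \<longleftrightarrow> FF (Pfin1 H)) \<and>
         (aperiodic H \<longleftrightarrow> FF_atomic (Pfin1 H))"
proof -
  interpret monoid H by (rule assms)
  have a1: "\<forall>a. atom (Pfin1 H) a \<longrightarrow> non_unit_divisor (Pfin1 H) a" unfolding atom_def by blast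
  have a2: "\<forall>a. atom (Pfin1 H) a \<longrightarrow> atom (Pfin1 H) a" by blast
  have i1: "\<forall>a. irred (Pfin1 H) a \<longrightarrow> non_unit_divisor (Pfin1 H) a" unfolding irred_def by blast
  have i2: "\<forall>a. atom (Pfin1 H) a \<longrightarrow> irred (Pfin1 H) a" unfolding atom_def irred_def by blast
  have A: "aperiodic H \<longleftrightarrow> BF_over (atom (Pfin1 H)) (Pfin1 H)"
    "aperiodic H \<longleftrightarrow> FF_over (atom (Pfin1 H)) (Pfin1 H)"
    using ap_good[OF _ a1 a2] nonap_bad[OF _ a1] by blast+
  have I: "aperiodic H \<longleftrightarrow> BF_over (irred (Pfin1 H)) (Pfin1 H)"
    "aperiodic H \<longleftrightarrow> FF_over (irred (Pfin1 H)) (Pfin1 H)"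
    using ap_good[OF _ i1 i2] nonap_bad[OF _ i1] by blast+
  show ?thesis unfolding BF_def BF_atomic_def FF_def FF_atomic_def using A I by blast
qed

end
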